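(* Let $G=(V,E,w)$ be a weighted undirected graph with $n$ vertices and positive edge weights, let $h,k$ be natural numbers, $\varepsilon>0$, and $c\ge1$ a constant. Let $S\subseteq V$ be obtained by including each vertex independently with probability $\min((c+2)\log n/h,1)$. Let $\tilde d(s,v)$, for $(s,v)\in S\times V$, be estimates satisfying $d(s,v)\le\tilde d(s,v)\le(1+\varepsilon)d^{2h}(s,v)$ for all $(s,v)\in S\times V$. Let $H$ be the weighted graph on vertex set $S$ having an edge $\{s,s'\}$ whenever the estimated distance between $s$ and $s'$ is finite, with weight equal to that estimate, let $H'$ be any $(2k-1)$-spanner of $H$, and for $s\in S$, $v\in V$ define $d_{out}(s,v)=\min_{s'\in S}\big(d_{H'}(s,s')+\tilde d(s',v)\big)$. Then, with high probability (over the choice of $S$), $d(s,v)\le d_{out}(s,v)\le(2k-1)(1+\varepsilon)\,d(s,v)$ for all $(s,v)\in S\times V$.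
   Context: $d(s,v)$ is the weighted distance in $G$, and $d^{h}(s,v)$ is the $h$-hop distance, the minimum weight of an $s$–$v$ path with at most $h$ edges ($\infty$ if none). A $(2k-1)$-spanner of $H$ is a subgraph $H'$ on the same vertex set with $d_{H'}(x,y)\le(2k-1)d_H(x,y)$ for all $x,y$; $d_{H'}(s,s)=0$. Logarithms are base $2$. "With high probability" means with probability at least $1-n^{-c}$ (up to constant changes in the exponent). *)

theory Defs
  imports "HOL-Probability.Probability"
begin

definition weighted_graph :: "'a set \<Rightarrow> ('a \<times> 'a) set \<Rightarrow> ('a \<Rightarrow> 'a \<Rightarrow> real) \<Rightarrow> bool" where
  "weighted_graph V E w \<longleftrightarrow> finite V \<and> E \<subseteq> V \<times> V \<and> sym E \<and>
     (\<forall>(u,v)\<in>E. w u v = w v u \<and> w u v > 0)"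

definition walk :: "'a set \<Rightarrow> ('a \<times> 'a) set \<Rightarrow> 'a list \<Rightarrow> bool" where
  "walk V E xs \<longleftrightarrow> xs \<noteq> [] \<and> set xs \<subseteq> V \<and> (\<forall>i < length xs - 1. (xs ! i, xs ! Suc i) \<in> E)"

definition walk_weight :: "('a \<Rightarrow> 'a \<Rightarrow> ereal) \<Rightarrow> 'a list \<Rightarrow> ereal" where
  "walk_weight w xs = (\<Sum>i < length xs - 1. w (xs ! i) (xs ! Suc i))"

definition gdist :: "'a set \<Rightarrow> ('a \<times> 'a) set \<Rightarrow> ('a \<Rightarrow> 'a \<Rightarrow> ereal) \<Rightarrow> 'a \<Rightarrow> 'a \<Rightarrow> ereal" where
  "gdist V E w s t = (INF xs \<in> {xs. walk V E xs \<and> hd xs = s \<and> last xs = t}. walk_weight w xs)"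

definition hop_dist :: "'a set \<Rightarrow> ('a \<times> 'a) set \<Rightarrow> ('a \<Rightarrow> 'a \<Rightarrow> ereal) \<Rightarrow> nat \<Rightarrow> 'a \<Rightarrow> 'a \<Rightarrow> ereal" where
  "hop_dist V E w h s t = (INF xs \<in> {xs. walk V E xs \<and> hd xs = s \<and> last xs = t \<and> length xs - 1 \<le> h}.
      walk_weight w xs)"

definition is_spanner :: "'a set \<Rightarrow> ('a \<times> 'a) set \<Rightarrow> ('a \<Rightarrow> 'a \<Rightarrow> ereal) \<Rightarrow> ('a \<times> 'a) set \<Rightarrow> ereal \<Rightarrow> bool" where
  "is_spanner V E w E' t \<longleftrightarrow> E' \<subseteq> E \<and> sym E' \<and>
     (\<forall>x\<in>V. \<forall>y\<in>V. gdist V E' w x y \<le> t * gdist V E w x y)"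

definition sample_set :: "'a set \<Rightarrow> real \<Rightarrow> 'a set pmf" where
  "sample_set V p = map_pmf (\<lambda>f. {v \<in> V. f v}) (Pi_pmf V False (\<lambda>_. bernoulli_pmf p))"

end

theory Submission
  imports Defs
begin


lemma ww_single[simp]: "walk_weight w [x] = 0"
  by (simp add: walk_weight_def)

lemma ww_cons2[simp]: "walk_weight w (x # y # ys) = w x y + walk_weight w (y # ys)"
  unfolding walk_weight_def by (simp del: sum.lessThan_Suc add: sum.lessThan_Suc_shift)

lemma walk_single[simp]: "walk V E [x] \<longleftrightarrow> x \<in> V"
  by (simp add: walk_def)

lemma walk_cons2[simp]: "walk V E (x # y # ys) \<longleftrightarrow> x \<in> V \<and> (x, y) \<in> E \<and> walk V E (y # ys)"
  unfolding walk_def by (auto simp: less_Suc_eq_0_disj)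

lemma walk_ww_append:
  "walk V E (xs @ y # ys) \<longleftrightarrow> walk V E (xs @ [y]) \<and> walk V E (y # ys)"
  "walk_weight w (xs @ y # ys) = walk_weight w (xs @ [y]) + walk_weight w (y # ys)"
proof (induction xs)
  case Nil
  { case 1 show ?case by (cases ys) auto }
  { case 2 show ?case by simp }
next
  case (Cons a xs)
  { case 1 show ?case using Cons.IH(1) by (cases xs) auto }
  { case 2 show ?case using Cons.IH(2) by (cases xs) (auto simp: add.assoc) }
qed

definition nonneg_w :: "('a \<times> 'a) set \<Rightarrow> ('a \<Rightarrow> 'a \<Rightarrow> ereal) \<Rightarrow> bool" where
  "nonneg_w E w \<longleftrightarrow> (\<forall>x y. (x, y) \<in> E \<longrightarrow> 0 \<le> w x y)"

lemma ww_nonneg: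
  assumes "walk V E xs" "nonneg_w E w"
  shows "0 \<le> walk_weight w xs"
  unfolding walk_weight_def
  using assms by (intro sum_nonneg) (auto simp: walk_def nonneg_w_def)

lemma shorten_step:
  assumes "walk V E xs" "\<not> distinct xs" "nonneg_w E w"
  shows "\<exists>ys. walk V E ys \<and> hd ys = hd xs \<and> last ys = last xs \<and>
           walk_weight w ys \<le> walk_weight w xs \<and> length ys < length xs"
proof -
  obtain a b c x where xs: "xs = a @ [x] @ b @ [x] @ c"
    using not_distinct_decomp[OF assms(2)] by blast
  have xs2: "xs = a @ x # (b @ x # c)" using xs by simp
  have wa: "walk V E (a @ [x])" "walk V E (x # b @ x # c)"
    using assms(1) walk_ww_append(1)[of V E a x "b @ x # c"] unfolding xs2 by auto
  have wb: "walk V E (x # b @ [x])" "walk V E (x # c)"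
    using wa(2) walk_ww_append(1)[of V E "x # b" x c] by auto
  have w1: "walk V E (a @ [x])" "walk V E (x # b @ [x])" "walk V E (x # c)"
    using wa wb by auto
  have ww0: "walk_weight w (x # b @ x # c) = walk_weight w (x # b @ [x]) + walk_weight w (x # c)"
    using walk_ww_append(2)[of w "x # b" x c] by simp
  have ww: "walk_weight w xs = walk_weight w (a @ [x]) + (walk_weight w (x # b @ [x]) + walk_weight w (x # c))"
    unfolding xs2 walk_ww_append(2)[of w a x "b @ x # c"] ww0 by simp
  let ?ys = "a @ x # c"
  have "walk V E ?ys" using w1 walk_ww_append(1)[of V E a] by blast
  moreover have "walk_weight w ?ys = walk_weight w (a @ [x]) + walk_weight w (x # c)"
    by (rule walk_ww_append(2))
  moreover have "0 \<le> walk_weight w (x # b @ [x])" using ww_nonneg[OF w1(2) assms(3)] .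
  ultimately have le: "walk_weight w ?ys \<le> walk_weight w xs"
    using ww by (simp add: add_left_mono add_increasing)
  have "hd ?ys = hd xs" "last ?ys = last xs" "length ?ys < length xs" by (simp_all add: xs2 hd_append)
  then show ?thesis using le \<open>walk V E ?ys\<close> by blast
qed

lemma shorten:
  assumes "walk V E xs" "nonneg_w E w"
  shows "\<exists>ys. walk V E ys \<and> distinct ys \<and> hd ys = hd xs \<and> last ys = last xs \<and>
           walk_weight w ys \<le> walk_weight w xs \<and> length ys \<le> length xs"
  using assms(1)
proof (induction xs rule: measure_induct_rule[where f = length])
  case (less xs)
  show ?case
  proof (cases "distinct xs")
    case True then show ?thesis using less.prems by blast
  next
    case False
    then obtain ys where ys: "walk V E ys" "hd ys = hd xs" "last ys = last xs"
      "walk_weight w ys \<le> walk_weight w xs" "length ys < length xs"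
      using shorten_step[OF less.prems False assms(2)] by blast
    from less.IH[OF ys(5) ys(1)] ys show ?thesis by (metis order.trans less_imp_le)
  qed
qed

lemma walk_nonempty: "walk V E xs \<Longrightarrow> xs \<noteq> []" by (simp add: walk_def)

lemma finite_distinct_walks:
  assumes "finite V"
  shows "finite {xs. walk V E xs \<and> distinct xs \<and> P xs}"
proof -
  have "{xs. walk V E xs \<and> distinct xs \<and> P xs} \<subseteq> {xs. set xs \<subseteq> V \<and> length xs \<le> card V}"
    using assms by (auto simp: walk_def intro: card_mono dest!: distinct_card[symmetric])
  moreover have "finite {xs. set xs \<subseteq> V \<and> length xs \<le> card V}"
    using finite_lists_length_le[OF assms] .
  ultimately show ?thesis by (rule finite_subset)
qed

lemma gdist_le: "walk V E xs \<Longrightarrow> hd xs = s \<Longrightarrow> last xs = t \<Longrightarrow> gdist V E w s t \<le> walk_weight w xs"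
  unfolding gdist_def by (rule INF_lower) auto

lemma gdist_nonneg: "nonneg_w E w \<Longrightarrow> 0 \<le> gdist V E w s t"
  unfolding gdist_def by (rule INF_greatest) (auto intro: ww_nonneg)

lemma gdist_inf: "\<not> (\<exists>xs. walk V E xs \<and> hd xs = s \<and> last xs = t) \<Longrightarrow> gdist V E w s t = \<infinity>"
proof -
  assume a: "\<not> (\<exists>xs. walk V E xs \<and> hd xs = s \<and> last xs = t)"
  have e: "{xs. walk V E xs \<and> hd xs = s \<and> last xs = t} = {}" using a by blast
  show ?thesis unfolding gdist_def e by (simp add: top_ereal_def)
qed

lemma gdist_attained:
  assumes "finite V" "nonneg_w E w" "walk V E xs" "hd xs = s" "last xs = t"
  shows "\<exists>P. walk V E P \<and> distinct P \<and> hd P = s \<and> last P = t \<and> walk_weight w P = gdist V E w s t"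
proof -
  let ?D = "{P. walk V E P \<and> distinct P \<and> (hd P = s \<and> last P = t)}"
  have fin: "finite ?D" by (rule finite_distinct_walks[OF assms(1)])
  obtain ys where ys: "walk V E ys" "distinct ys" "hd ys = s" "last ys = t"
    using shorten[OF assms(3,2)] assms(4,5) by blast
  have ne: "?D \<noteq> {}" using ys by blast
  obtain P where P: "P \<in> ?D" "\<And>Q. Q \<in> ?D \<Longrightarrow> walk_weight w P \<le> walk_weight w Q"
  proof -
    have f2: "finite (walk_weight w ` ?D)" using fin by simp
    have "Min (walk_weight w ` ?D) \<in> walk_weight w ` ?D" by (rule Min_in[OF f2]) (use ne in simp)
    then have "\<exists>P. P \<in> ?D \<and> Min (walk_weight w ` ?D) = walk_weight w P"
      by (simp only: image_iff Bex_def)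
    then obtain P where P1: "P \<in> ?D" and P2': "Min (walk_weight w ` ?D) = walk_weight w P"
      by (elim exE conjE)
    note P2 = P2'[symmetric]
    have P3: "\<And>Q. Q \<in> ?D \<Longrightarrow> Min (walk_weight w ` ?D) \<le> walk_weight w Q"
      by (intro Min_le[OF f2] imageI)
    show ?thesis
      by (rule that[of P, OF P1]) (simp only: P2 P3)
  qed
  have "gdist V E w s t \<le> walk_weight w P" using P(1) by (auto intro: gdist_le)
  moreover have "walk_weight w P \<le> gdist V E w s t"
    unfolding gdist_def
  proof (rule INF_greatest)
    fix Q assume "Q \<in> {xs. walk V E xs \<and> hd xs = s \<and> last xs = t}"
    then obtain R where "walk V E R" "distinct R" "hd R = s" "last R = t" "walk_weight w R \<le> walk_weight w Q"
      using shorten[of V E Q w] assms(2) by auto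
    then show "walk_weight w P \<le> walk_weight w Q" using P(2)[of R] by auto
  qed
  ultimately show ?thesis using P(1) by auto
qed



lemma walk_concat:
  assumes "walk V E P" "walk V E Q" "last P = hd Q"
  shows "walk V E (P @ tl Q) \<and> walk_weight w (P @ tl Q) = walk_weight w P + walk_weight w Q \<and>
         hd (P @ tl Q) = hd P \<and> last (P @ tl Q) = last Q"
proof -
  have Pne: "P \<noteq> []" and Qne: "Q \<noteq> []" using assms walk_nonempty by auto
  define t where "t = last P"
  have Pt: "butlast P @ [t] = P" using Pne by (simp add: t_def)
  have Qt: "t # tl Q = Q" using Qne assms(3) by (simp add: t_def)
  have e: "P @ tl Q = butlast P @ t # tl Q"
  proof -
    have "butlast P @ t # tl Q = (butlast P @ [t]) @ tl Q" by simp
    then show ?thesis unfolding Pt by simp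
  qed
  have "walk V E (butlast P @ t # tl Q)"
    using walk_ww_append(1)[of V E "butlast P" t "tl Q"] unfolding Pt Qt using assms(1,2) by simp
  moreover have "walk_weight w (butlast P @ t # tl Q) = walk_weight w P + walk_weight w Q"
    using walk_ww_append(2)[of w "butlast P" t "tl Q"] unfolding Pt Qt .
  moreover have "hd (butlast P @ t # tl Q) = hd P"
  proof -
    have "hd (butlast P @ t # tl Q) = hd (butlast P @ [t])" by (cases "butlast P") auto
    then show ?thesis unfolding Pt .
  qed
  moreover have "last (butlast P @ t # tl Q) = last Q"
  proof -
    have "last (butlast P @ t # tl Q) = last (t # tl Q)" by simp
    then show ?thesis unfolding Qt .
  qed
  ultimately show ?thesis unfolding e by simp
qed

lemma gdist_reach: "gdist V E w s t < \<infinity> \<Longrightarrow> \<exists>xs. walk V E xs \<and> hd xs = s \<and> last xs = t"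
proof (rule ccontr)
  assume a: "gdist V E w s t < \<infinity>" and b: "\<not> (\<exists>xs. walk V E xs \<and> hd xs = s \<and> last xs = t)"
  from gdist_inf[OF b, of w] a show False by simp
qed

lemma gdist_triangle:
  assumes "finite V" "nonneg_w E w"
  shows "gdist V E w s u \<le> gdist V E w s t + gdist V E w t u"
proof (cases "gdist V E w s t < \<infinity> \<and> gdist V E w t u < \<infinity>")
  case True
  have T1: "gdist V E w s t < \<infinity>" and T2: "gdist V E w t u < \<infinity>" using True by simp_all
  obtain xs where xs: "walk V E xs" "hd xs = s" "last xs = t" using gdist_reach[OF T1] by (elim exE conjE)
  obtain ys where ys: "walk V E ys" "hd ys = t" "last ys = u" using gdist_reach[OF T2] by (elim exE conjE)
  obtain P where P: "walk V E P" "distinct P" "hd P = s" "last P = t" "walk_weight w P = gdist V E w s t"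
    using gdist_attained[OF assms xs] by (elim exE conjE)
  obtain Q where Q: "walk V E Q" "distinct Q" "hd Q = t" "last Q = u" "walk_weight w Q = gdist V E w t u"
    using gdist_attained[OF assms ys] by (elim exE conjE)
  have "last P = hd Q" using P Q by simp
  note c = walk_concat[OF P(1) Q(1) this, of w]
  have "gdist V E w s u \<le> walk_weight w (P @ tl Q)"
    by (rule gdist_le) (use c P Q in auto)
  then show ?thesis using c P Q by simp
next
  case False
  have "0 \<le> gdist V E w s t" "0 \<le> gdist V E w t u" using gdist_nonneg[OF assms(2)] by auto
  have inf: "gdist V E w s t + gdist V E w t u = \<infinity>"
  proof (cases "gdist V E w s t = \<infinity>")
    case True then show ?thesis using \<open>0 \<le> gdist V E w t u\<close> by simp
  next
    case F: False
    then have "gdist V E w t u = \<infinity>" using False by auto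
    then show ?thesis using \<open>0 \<le> gdist V E w s t\<close> by simp
  qed
  show ?thesis unfolding inf by simp
qed

lemma gdist_edge: "(a, b) \<in> E \<Longrightarrow> a \<in> V \<Longrightarrow> b \<in> V \<Longrightarrow> gdist V E w a b \<le> w a b"
  using gdist_le[of V E "[a, b]" a b w] by simp

lemma gdist_refl: "a \<in> V \<Longrightarrow> gdist V E w a a \<le> 0"
  using gdist_le[of V E "[a]" a a w] by simp

lemma gdist_refl0: "a \<in> V \<Longrightarrow> nonneg_w E w \<Longrightarrow> gdist V E w a a = 0"
  using gdist_refl gdist_nonneg by (metis order.antisym)

lemma walk_rev:
  assumes "sym E" "\<And>x y. (x, y) \<in> E \<Longrightarrow> w x y = w y x"
  shows "walk V E xs \<Longrightarrow> walk V E (rev xs) \<and> walk_weight w (rev xs) = walk_weight w xs"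
proof (induction xs)
  case Nil then show ?case by (simp add: walk_def)
next
  case (Cons x xs)
  show ?case
  proof (cases xs)
    case Nil then show ?thesis using Cons.prems by simp
  next
    case (Cons y ys)
    have wy: "walk V E (y # ys)" "(x, y) \<in> E" "x \<in> V" using Cons.prems Cons by auto
    have IH: "walk V E (rev ys @ [y])" "walk_weight w (rev ys @ [y]) = walk_weight w (y # ys)"
      using Cons.IH wy(1) Cons by auto
    have yx: "(y, x) \<in> E" using wy(2) assms(1) by (auto simp: sym_def)
    have yV: "y \<in> V" using wy(1) by (auto simp: walk_def)
    have "walk V E (rev ys @ y # [x])" using walk_ww_append(1)[of V E "rev ys" y "[x]"] IH yx wy yV by simp
    moreover have "walk_weight w (rev ys @ y # [x]) = walk_weight w (x # y # ys)"
      using walk_ww_append(2)[of w "rev ys" y "[x]"] IH assms(2)[OF wy(2)] by (simp add: add.commute)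
    ultimately show ?thesis using Cons by simp
  qed
qed

lemma gdist_sym:
  assumes "sym E" "\<And>x y. (x, y) \<in> E \<Longrightarrow> w x y = w y x"
  shows "gdist V E w s t = gdist V E w t s"
proof -
  have *: "gdist V E w a b \<le> gdist V E w b a" for a b
    unfolding gdist_def[of V E w b a]
  proof (rule INF_greatest)
    fix xs assume "xs \<in> {xs. walk V E xs \<and> hd xs = b \<and> last xs = a}"
    then have "walk V E xs" "hd xs = b" "last xs = a" by auto
    moreover have "xs \<noteq> []" using walk_nonempty calculation by blast
    ultimately show "gdist V E w a b \<le> walk_weight w xs"
      using walk_rev[OF assms] gdist_le[of V E "rev xs" a b w] by (simp add: hd_rev last_rev)
  qed
  show ?thesis using *[of s t] *[of t s] by simp
qed

lemma hop_le: "walk V E xs \<Longrightarrow> hd xs = s \<Longrightarrow> last xs = t \<Longrightarrow> length xs - 1 \<le> h \<Longrightarrow>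
   hop_dist V E w h s t \<le> walk_weight w xs"
  unfolding hop_dist_def by (rule INF_lower) auto

definition best where
  "best V E w s t P \<longleftrightarrow> walk V E P \<and> hd P = s \<and> last P = t \<and> walk_weight w P = gdist V E w s t \<and>
     (\<forall>Q. walk V E Q \<and> hd Q = s \<and> last Q = t \<and> walk_weight w Q = gdist V E w s t \<longrightarrow> length P \<le> length Q)"

lemma best_exists:
  assumes "finite V" "nonneg_w E w" "gdist V E w s t < \<infinity>"
  shows "\<exists>P. best V E w s t P"
proof -
  obtain xs where "walk V E xs" "hd xs = s" "last xs = t" using gdist_reach[OF assms(3)] by blast
  then obtain P0 where "walk V E P0 \<and> hd P0 = s \<and> last P0 = t \<and> walk_weight w P0 = gdist V E w s t"
    using gdist_attained[OF assms(1,2)] by metis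
  from ex_has_least_nat[of "\<lambda>Q. walk V E Q \<and> hd Q = s \<and> last Q = t \<and> walk_weight w Q = gdist V E w s t", OF this, of length]
  show ?thesis unfolding best_def by blast
qed

lemma best_distinct:
  assumes "nonneg_w E w" "best V E w s t P"
  shows "distinct P"
proof (rule ccontr)
  assume nd: "\<not> distinct P"
  have P: "walk V E P" "hd P = s" "last P = t" "walk_weight w P = gdist V E w s t"
    using assms(2) by (auto simp: best_def)
  obtain ys where ys: "walk V E ys" "hd ys = hd P" "last ys = last P"
    "walk_weight w ys \<le> walk_weight w P" "length ys < length P"
    using shorten_step[OF P(1) nd assms(1)] by blast
  have "gdist V E w s t \<le> walk_weight w ys" by (rule gdist_le[OF ys(1)]) (simp_all add: ys P)
  then have wy: "walk_weight w ys = gdist V E w s t" using ys(4) P(4) by (metis order.antisym)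
  have "walk V E ys \<and> hd ys = s \<and> last ys = t \<and> walk_weight w ys = gdist V E w s t"
    using ys(1-3) P(2,3) wy by metis
  then have "length P \<le> length ys" using assms(2) unfolding best_def by blast
  then show False using ys(5) by simp
qed

lemma walk_lower:
  assumes "finite V" "nonneg_w E w" "\<And>a b. (a, b) \<in> E2 \<Longrightarrow> gdist V E w a b \<le> f a b"
    and "V2 \<subseteq> V"
  shows "walk V2 E2 xs \<Longrightarrow> gdist V E w (hd xs) (last xs) \<le> walk_weight f xs"
proof (induction xs)
  case Nil then show ?case by (simp add: walk_def)
next
  case (Cons x xs)
  show ?case
  proof (cases xs)
    case Nil then show ?thesis using Cons.prems assms(4) by (auto intro!: gdist_refl)
  next
    case C: (Cons y ys)
    have "walk V2 E2 xs" "(x, y) \<in> E2" using Cons.prems C by auto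
    then have "gdist V E w y (last xs) \<le> walk_weight f xs" "gdist V E w x y \<le> f x y"
      using Cons.IH assms(3) C by auto
    then have le: "gdist V E w x y + gdist V E w y (last xs) \<le> walk_weight f (x # xs)"
      using C by (simp add: add_mono)
    have tri: "gdist V E w x (last xs) \<le> gdist V E w x y + gdist V E w y (last xs)"
      by (rule gdist_triangle[OF assms(1,2)])
    have l: "last (x # xs) = last xs" using C by simp
    show ?thesis unfolding l list.sel(1) by (rule order.trans[OF tri le])
  qed
qed



lemma ereal_squeeze:
  fixes a c a' c' D :: ereal
  assumes "0 \<le> a'" "0 \<le> c'" "a' \<le> a" "c' \<le> c" "a + c = D" "D \<le> a' + c'" "D < \<infinity>"
  shows "a' = a \<and> c' = c"
  using assms by (cases a; cases c; cases a'; cases c'; cases D) auto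

lemma ereal_split:
  fixes p q r x D :: ereal
  assumes "0 \<le> p" "0 \<le> q" "0 \<le> r" "0 \<le> x" "x \<le> p + q" "D \<le> x + r" "D = p + (q + r)" "D < \<infinity>"
  shows "x = p + q"
  using assms by (cases p; cases q; cases r; cases x; cases D) auto

lemma ereal_comb1:
  fixes X Y Z a b :: ereal
  assumes "0 \<le> c" "0 \<le> a" "0 \<le> b" "X \<le> Y + Z" "Y \<le> ereal c * a" "Z \<le> ereal c * b"
  shows "X \<le> ereal c * (a + b)"
proof -
  have "Y + Z \<le> ereal c * a + ereal c * b" using assms(5,6) by (rule add_mono)
  also have "\<dots> = ereal c * (a + b)" using assms(1-3)
    by (cases a; cases b) (auto simp: distrib_left)
  finally show ?thesis using assms(4) by simp
qed

lemma ereal_comb2: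
  fixes X A B a b :: ereal
  assumes "1 \<le> K" "0 < e" "0 \<le> a" "0 \<le> b" "0 \<le> A" "X \<le> ereal K * A + B" "A \<le> ereal e * a" "B \<le> ereal e * b"
  shows "X \<le> ereal (K * e) * (a + b)"
proof -
  have "ereal K * A \<le> ereal K * (ereal e * a)" using assms by (intro ereal_mult_left_mono) auto
  then have X1: "X \<le> ereal K * (ereal e * a) + ereal e * b" using assms(6,8) by (metis add_mono order.trans)
  have ke: "1 * e \<le> K * e" by (rule mult_right_mono) (use assms in auto)
  have X2: "ereal K * (ereal e * a) + ereal e * b \<le> ereal (K * e) * (a + b)" using assms(1-4) ke
    by (cases a; cases b) (auto simp: algebra_simps intro!: mult_right_mono mult_left_mono add_mono)
  show ?thesis using X1 X2 by (rule order.trans)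
qed



lemma ereal_fin_parts:
  fixes a c :: ereal
  shows "0 \<le> a \<Longrightarrow> 0 \<le> c \<Longrightarrow> a + c < \<infinity> \<Longrightarrow> a < \<infinity> \<and> c < \<infinity>"
  by (cases a; cases c) auto

definition cp :: "'a set \<Rightarrow> ('a \<times> 'a) set \<Rightarrow> ('a \<Rightarrow> 'a \<Rightarrow> ereal) \<Rightarrow> 'a \<Rightarrow> 'a \<Rightarrow> 'a list" where
  "cp V E W u v = (SOME P. best V E W u v P)"

definition win :: "'a set \<Rightarrow> ('a \<times> 'a) set \<Rightarrow> ('a \<Rightarrow> 'a \<Rightarrow> ereal) \<Rightarrow> nat \<Rightarrow> 'a \<Rightarrow> 'a \<Rightarrow> 'a set" where
  "win V E W h u v = set (take (2 * h) (tl (cp V E W u v)))"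

definition badp :: "'a set \<Rightarrow> ('a \<times> 'a) set \<Rightarrow> ('a \<Rightarrow> 'a \<Rightarrow> ereal) \<Rightarrow> nat \<Rightarrow> ('a \<times> 'a) set" where
  "badp V E W h = {(u, v). u \<in> V \<and> v \<in> V \<and> gdist V E W u v < \<infinity> \<and> 2 * h + 1 < length (cp V E W u v)}"

lemma cp_best:
  assumes "finite V" "nonneg_w E W" "gdist V E W u v < \<infinity>"
  shows "best V E W u v (cp V E W u v)"
  unfolding cp_def by (rule someI_ex) (rule best_exists[OF assms])

lemma det_main:
  fixes V :: "'a set" and E :: "('a \<times> 'a) set" and W :: "'a \<Rightarrow> 'a \<Rightarrow> ereal"
    and dt :: "'a \<Rightarrow> 'a \<Rightarrow> ereal" and \<epsilon> :: real and S :: "'a set"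
  defines "d \<equiv> gdist V E W"
  defines "HE \<equiv> {(s, s'). s \<in> S \<and> s' \<in> S \<and> s \<noteq> s' \<and> min (dt s s') (dt s' s) < \<infinity>}"
  defines "Hw \<equiv> (\<lambda>s s'. min (dt s s') (dt s' s))"
  assumes fin: "finite V" and nn: "nonneg_w E W" and symE: "sym E"
    and symW: "\<And>x y. (x, y) \<in> E \<Longrightarrow> W x y = W y x"
    and SV: "S \<subseteq> V"
    and hit: "\<And>u v. (u, v) \<in> badp V E W h \<Longrightarrow> win V E W h u v \<inter> S \<noteq> {}"
    and dt1: "\<And>s v. s \<in> S \<Longrightarrow> v \<in> V \<Longrightarrow> d s v \<le> dt s v"
    and dt2: "\<And>s v. s \<in> S \<Longrightarrow> v \<in> V \<Longrightarrow> dt s v \<le> ereal (1 + \<epsilon>) * hop_dist V E W (2 * h) s v"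
    and sp: "is_spanner S HE Hw E' (ereal (2 * real k - 1))"
    and k: "k \<ge> 1" and eps: "\<epsilon> > 0"
    and s: "s \<in> S" and v: "v \<in> V"
  shows "d s v \<le> (INF s'\<in>S. gdist S E' Hw s s' + dt s' v) \<and>
         (INF s'\<in>S. gdist S E' Hw s s' + dt s' v) \<le> ereal ((2 * real k - 1) * (1 + \<epsilon>)) * d s v"
proof -
  have finS: "finite S" using fin SV finite_subset by blast
  have d0: "0 \<le> d a b" for a b unfolding d_def by (rule gdist_nonneg[OF nn])
  have dsym: "d a b = d b a" for a b unfolding d_def by (rule gdist_sym[OF symE symW])
  have dtri: "d a c \<le> d a b + d b c" for a b c unfolding d_def by (rule gdist_triangle[OF fin nn])
  have dt0: "0 \<le> dt a b" if "a \<in> S" "b \<in> V" for a b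
    using dt1[OF that] d0[of a b] by simp
  have Hw0: "nonneg_w HE Hw"
    unfolding nonneg_w_def
  proof (intro allI impI)
    fix a b assume "(a, b) \<in> HE"
    then have "a \<in> S" "b \<in> S" unfolding HE_def by auto
    then have "0 \<le> dt a b" "0 \<le> dt b a" using dt0 SV by auto
    then show "0 \<le> Hw a b" unfolding Hw_def by simp
  qed
  define dH where "dH = gdist S HE Hw"
  have dHtri: "dH a c \<le> dH a b + dH b c" for a b c unfolding dH_def by (rule gdist_triangle[OF finS Hw0])
  define e where "e = 1 + \<epsilon>"
  have e0: "0 < e" using eps by (simp add: e_def)
  have dt2': "dt a b \<le> ereal e * d a b" if "a \<in> S" "b \<in> V" "hop_dist V E W (2 * h) a b \<le> d a b" for a b
  proof -
    have "ereal e * hop_dist V E W (2 * h) a b \<le> ereal e * d a b"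
      using that(3) e0 by (intro ereal_mult_left_mono) auto
    then show ?thesis using dt2[OF that(1,2)] unfolding e_def by simp
  qed
  have claim: "\<forall>u v Q. u \<in> S \<longrightarrow> v \<in> V \<longrightarrow> walk V E Q \<longrightarrow> hd Q = u \<longrightarrow> last Q = v \<longrightarrow>
       walk_weight W Q = d u v \<longrightarrow> d u v < \<infinity> \<longrightarrow> length Q = n \<longrightarrow>
       (\<exists>y\<in>S. dH u y \<le> ereal e * d u y \<and> dt y v \<le> ereal e * d y v \<and> d u y + d y v = d u v)" for n
  proof (induction n rule: less_induct)
    case (less n)
    show ?case
    proof (intro allI impI)
      fix u v Q assume u: "u \<in> S" and v: "v \<in> V" and Q: "walk V E Q" "hd Q = u" "last Q = v"
        "walk_weight W Q = d u v" and dfin: "d u v < \<infinity>" and Qn: "length Q = n"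
      have uV: "u \<in> V" using u SV by auto
      define P where "P = cp V E W u v"
      have bP: "best V E W u v P" unfolding P_def using cp_best[OF fin nn] dfin unfolding d_def by blast
      then have P: "walk V E P" "hd P = u" "last P = v" "walk_weight W P = d u v"
        unfolding best_def d_def by auto
      have Pmin: "length P \<le> length Q" using bP Q unfolding best_def d_def by auto
      have Pd: "distinct P" by (rule best_distinct[OF nn bP])
      have Pne: "P \<noteq> []" using P(1) walk_nonempty by blast
      show "\<exists>y\<in>S. dH u y \<le> ereal e * d u y \<and> dt y v \<le> ereal e * d y v \<and> d u y + d y v = d u v"
      proof (cases "length P \<le> 2 * h + 1")
        case True
        have "hop_dist V E W (2 * h) u v \<le> walk_weight W P"
          by (rule hop_le[OF P(1-3)]) (use True in simp)
        then have h1: "dt u v \<le> ereal e * d u v" using dt2'[OF u v] P(4) by simp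
        have "dH u u \<le> 0" unfolding dH_def by (rule gdist_refl[OF u])
        moreover have "0 \<le> ereal e * d u u" using e0 d0[of u u] by (cases "d u u") auto
        moreover have "d u u = 0" unfolding d_def by (rule gdist_refl0[OF uV nn])
        ultimately show ?thesis using u h1 by (intro bexI[of _ u]) auto
      next
        case False
        have bad: "(u, v) \<in> badp V E W h" unfolding badp_def using uV v dfin False
          unfolding P_def d_def by auto
        obtain z where zW: "z \<in> win V E W h u v" and zS: "z \<in> S" using hit[OF bad] by blast
        from zW obtain j where j: "j < length (take (2 * h) (tl P))" "z = take (2 * h) (tl P) ! j"
          unfolding win_def P_def[symmetric] by (auto simp: in_set_conv_nth)
        define i where "i = Suc j"
        have jl: "j < 2 * h" "j < length (tl P)" using j(1) by auto
        have zi: "z = P ! i" using j(2) jl nth_tl[OF jl(2)] by (simp add: i_def)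
        have i1: "1 \<le> i" "i \<le> 2 * h" "Suc i < length P" using jl False by (auto simp: i_def)
        have iP: "i < length P" using i1 by simp
        have Pdec: "P = take i P @ z # drop (Suc i) P" using id_take_nth_drop[OF iP] zi by simp
        define A where "A = take i P @ [z]"
        define C where "C = z # drop (Suc i) P"
        have wP': "walk V E (take i P @ z # drop (Suc i) P)" using P(1) unfolding Pdec[symmetric] .
        have wwP': "walk_weight W (take i P @ z # drop (Suc i) P) = d u v" using P(4) unfolding Pdec[symmetric] .
        have wA: "walk V E A" and wC: "walk V E C"
          using wP' walk_ww_append(1)[of V E "take i P" z "drop (Suc i) P"] unfolding A_def C_def by auto
        have wsum: "walk_weight W A + walk_weight W C = d u v"
          using wwP' walk_ww_append(2)[of W "take i P" z "drop (Suc i) P"] unfolding A_def C_def by simp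
        have hA: "hd A = u" using i1 P(2) Pne unfolding A_def by (simp add: hd_append)
        have lA: "last A = z" unfolding A_def by simp
        have hC: "hd C = z" unfolding C_def by simp
        have lC: "last C = v" using i1 P(3) unfolding C_def by simp
        have lenA: "length A - 1 \<le> 2 * h" using i1 iP unfolding A_def by simp
        have lenC: "length C < n" using i1 Pmin Qn unfolding C_def by simp
        have A0: "0 \<le> walk_weight W A" by (rule ww_nonneg[OF wA nn])
        have C0: "0 \<le> walk_weight W C" by (rule ww_nonneg[OF wC nn])
        have duz: "d u z \<le> walk_weight W A" unfolding d_def by (rule gdist_le[OF wA hA lA])
        have dzv: "d z v \<le> walk_weight W C" unfolding d_def by (rule gdist_le[OF wC hC lC])
        have eqs: "d u z = walk_weight W A \<and> d z v = walk_weight W C"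
          by (rule ereal_squeeze[OF d0 d0 duz dzv wsum dtri dfin])
        have fins: "walk_weight W A < \<infinity> \<and> walk_weight W C < \<infinity>"
          using ereal_fin_parts[OF A0 C0] wsum dfin by simp
        have hop: "hop_dist V E W (2 * h) u z \<le> d u z"
          using hop_le[OF wA hA lA lenA] eqs by simp
        have zV: "z \<in> V" using zS SV by auto
        have dtuz: "dt u z \<le> ereal e * d u z" by (rule dt2'[OF u zV hop])
        have uz: "u \<noteq> z"
        proof
          assume "u = z"
          then have "P ! 0 = P ! i" using zi P(2) Pne by (simp add: hd_conv_nth)
          then show False using nth_eq_iff_index_eq[OF Pd _ iP, of 0] i1 Pne by simp
        qed
        have duzfin: "d u z < \<infinity>" using eqs fins by simp
        have ef: "ereal e * d u z < \<infinity>" using duzfin d0[of u z] by (cases "d u z") auto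
        have dtfin: "dt u z < \<infinity>" using dtuz ef by (rule order.strict_trans1)
        have "Hw u z < \<infinity>" unfolding Hw_def by (rule le_less_trans[OF min.cobounded1 dtfin])
        then have HEuz: "(u, z) \<in> HE" using u zS uz unfolding HE_def Hw_def by simp
        have "dH u z \<le> Hw u z" unfolding dH_def by (rule gdist_edge[OF HEuz u zS])
        then have dHuz: "dH u z \<le> ereal e * d u z" using dtuz unfolding Hw_def
          by (metis min.coboundedI1 order.trans)
        have "walk_weight W C = d z v" using eqs by simp
        moreover have "d z v < \<infinity>" using eqs fins by simp
        ultimately obtain y where yS: "y \<in> S" and y1: "dH z y \<le> ereal e * d z y"
          and y2: "dt y v \<le> ereal e * d y v" and y3: "d z y + d y v = d z v"
          using less.IH[OF lenC, rule_format, OF zS v wC hC lC] by blast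
        have duy: "d u y = d u z + d z y"
        proof (rule ereal_split[OF d0 d0 d0 d0 dtri dtri _ dfin])
          show "d u v = d u z + (d z y + d y v)" using y3 eqs wsum by simp
        qed
        have "dH u y \<le> ereal e * (d u z + d z y)"
          by (rule ereal_comb1[OF _ d0 d0 dHtri dHuz y1]) (use e0 in simp)
        then have r1: "dH u y \<le> ereal e * d u y" using duy by simp
        have r3: "d u y + d y v = d u v" using duy y3 eqs wsum by (simp add: add.assoc)
        show ?thesis using yS r1 y2 r3 by blast
      qed
    qed
  qed
  have E'HE: "E' \<subseteq> HE" using sp unfolding is_spanner_def by blast
  have edge_low: "d a b \<le> Hw a b" if "(a, b) \<in> E'" for a b
  proof -
    have "a \<in> S" "b \<in> S" using that E'HE unfolding HE_def by auto
    then have "d a b \<le> dt a b" "d b a \<le> dt b a" using dt1 SV by auto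
    then show ?thesis unfolding Hw_def using dsym[of a b] by simp
  qed
  have dH'low: "d a b \<le> gdist S E' Hw a b" for a b
    unfolding gdist_def[of S E' Hw]
  proof (rule INF_greatest)
    fix xs assume "xs \<in> {xs. walk S E' xs \<and> hd xs = a \<and> last xs = b}"
    then have xs: "walk S E' xs" "hd xs = a" "last xs = b" by auto
    have "gdist V E W (hd xs) (last xs) \<le> walk_weight Hw xs"
      by (rule walk_lower[OF fin nn _ SV xs(1)]) (use edge_low in \<open>simp add: d_def\<close>)
    then show "d a b \<le> walk_weight Hw xs" using xs unfolding d_def by simp
  qed
  have low: "d s v \<le> (INF s'\<in>S. gdist S E' Hw s s' + dt s' v)"
  proof (rule INF_greatest)
    fix s' assume s': "s' \<in> S"
    have "d s v \<le> d s s' + d s' v" by (rule dtri)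
    also have "\<dots> \<le> gdist S E' Hw s s' + dt s' v"
      using dH'low dt1[OF s' v] by (rule add_mono)
    finally show "d s v \<le> gdist S E' Hw s s' + dt s' v" .
  qed
  have up: "(INF s'\<in>S. gdist S E' Hw s s' + dt s' v) \<le> ereal ((2 * real k - 1) * (1 + \<epsilon>)) * d s v"
  proof (cases "d s v < \<infinity>")
    case False
    then have "d s v = \<infinity>" by simp
    moreover have "0 < (2 * real k - 1) * (1 + \<epsilon>)" using k eps by simp
    moreover have "2 * real k \<noteq> 1" using k by simp
    moreover have "1 + \<epsilon> \<noteq> 0" using eps by simp
    ultimately have inf: "ereal ((2 * real k - 1) * (1 + \<epsilon>)) * d s v = \<infinity>"
      using k eps by simp
    show ?thesis unfolding inf by simp
  next
    case True
    have T': "gdist V E W s v < \<infinity>" using True unfolding d_def .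
    obtain xs where xs: "walk V E xs" "hd xs = s" "last xs = v"
      using gdist_reach[OF T'] by (elim exE conjE)
    have sV: "s \<in> V" using s SV by auto
    obtain Q where Q: "walk V E Q" "distinct Q" "hd Q = s" "last Q = v" "walk_weight W Q = d s v"
      using gdist_attained[OF fin nn xs] unfolding d_def by (elim exE conjE)
    obtain y where yS: "y \<in> S" and y1: "dH s y \<le> ereal e * d s y"
      and y2: "dt y v \<le> ereal e * d y v" and y3: "d s y + d y v = d s v"
      using claim[of "length Q", rule_format, OF s v Q(1) Q(3) Q(4) Q(5) True refl] by blast
    have "(INF s'\<in>S. gdist S E' Hw s s' + dt s' v) \<le> gdist S E' Hw s y + dt y v"
      by (rule INF_lower[OF yS])
    also have "\<dots> \<le> ereal (2 * real k - 1) * dH s y + dt y v"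
      using sp s yS unfolding is_spanner_def dH_def by (intro add_right_mono) blast
    finally have X: "(INF s'\<in>S. gdist S E' Hw s s' + dt s' v) \<le> ereal (2 * real k - 1) * dH s y + dt y v" .
    have "(INF s'\<in>S. gdist S E' Hw s s' + dt s' v) \<le> ereal ((2 * real k - 1) * e) * (d s y + d y v)"
      by (rule ereal_comb2[OF _ e0 d0 d0 _ X y1 y2]) (use k in simp, simp add: dH_def gdist_nonneg[OF Hw0])
    then show ?thesis using y3 unfolding e_def by simp
  qed
  show ?thesis using low up by blast
qed



lemma badp_props:
  assumes fin: "finite V" and nn: "nonneg_w E W" and b: "(u, v) \<in> badp V E W h"
  shows "win V E W h u v \<subseteq> V" "card (win V E W h u v) = 2 * h" "2 * h + 1 < card V"
proof -
  define P where "P = cp V E W u v"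
  have uv: "u \<in> V" "v \<in> V" "gdist V E W u v < \<infinity>" "2 * h + 1 < length P"
    using b unfolding badp_def P_def by auto
  have bP: "best V E W u v P" unfolding P_def by (rule cp_best[OF fin nn uv(3)])
  have wP: "walk V E P" using bP unfolding best_def by auto
  have dP: "distinct P" by (rule best_distinct[OF nn bP])
  have sP: "set P \<subseteq> V" using wP unfolding walk_def by auto
  have "set (take (2 * h) (tl P)) \<subseteq> set P"
    using set_take_subset[of "2 * h" "tl P"] by (cases P) auto
  then show "win V E W h u v \<subseteq> V" using sP unfolding win_def P_def[symmetric] by blast
  have "distinct (take (2 * h) (tl P))" using dP by (simp add: distinct_tl)
  then have "card (set (take (2 * h) (tl P))) = length (take (2 * h) (tl P))" by (rule distinct_card)
  also have "\<dots> = 2 * h" using uv(4) by simp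
  finally show "card (win V E W h u v) = 2 * h" unfolding win_def P_def[symmetric] .
  have "length P = card (set P)" using distinct_card[OF dP] by simp
  also have "\<dots> \<le> card V" by (rule card_mono[OF fin sP])
  finally show "2 * h + 1 < card V" using uv(4) by simp
qed

lemma prob_miss:
  assumes fin: "finite V" and sub: "A \<subseteq> V" and p: "0 \<le> p" "p \<le> 1"
  shows "measure_pmf.prob (Pi_pmf V False (\<lambda>_. bernoulli_pmf p)) {f. \<forall>x\<in>A. \<not> f x} = (1 - p) ^ card A"
proof -
  have e: "{f. \<forall>x\<in>A. \<not> f x} = Pi V (\<lambda>x. if x \<in> A then {False} else UNIV)"
    using sub by (auto simp: Pi_def)
  have "measure_pmf.prob (Pi_pmf V False (\<lambda>_. bernoulli_pmf p)) {f. \<forall>x\<in>A. \<not> f x}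
     = (\<Prod>x\<in>V. measure_pmf.prob (bernoulli_pmf p) (if x \<in> A then {False} else UNIV))"
    unfolding e by (rule measure_Pi_pmf_Pi[OF fin])
  also have "\<dots> = (\<Prod>x\<in>V. if x \<in> A then 1 - p else 1)"
    by (intro prod.cong refl) (auto simp: measure_pmf_single p)
  also have "\<dots> = (1 - p) ^ card A"
    using fin sub by (simp add: prod.If_cases Int_absorb1 Int_absorb2)
  finally show ?thesis .
qed

lemma prob_bound:
  fixes V :: "'a set" and E W h p T
  assumes fin: "finite V" and nn: "nonneg_w E W" and p: "0 \<le> p" "p \<le> 1"
    and T: "\<And>S. S \<subseteq> V \<Longrightarrow> (\<forall>(u, v) \<in> badp V E W h. win V E W h u v \<inter> S \<noteq> {}) \<Longrightarrow> S \<in> T"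
  shows "measure_pmf.prob (sample_set V p) T \<ge> 1 - real (card (badp V E W h)) * (1 - p) ^ (2 * h)"
proof -
  define M where "M = Pi_pmf V False (\<lambda>_. bernoulli_pmf p)"
  define g where "g = (\<lambda>f. {v \<in> V. f v})"
  define B where "B = badp V E W h"
  define F where "F = (\<lambda>b. {f. \<forall>x\<in>win V E W h (fst b) (snd b). \<not> f x})"
  have finB: "finite B" unfolding B_def badp_def
    by (rule finite_subset[of _ "V \<times> V"]) (use fin in auto)
  have pre: "UNIV - (\<Union>b\<in>B. F b) \<subseteq> g -` T"
  proof
    fix f assume f: "f \<in> UNIV - (\<Union>b\<in>B. F b)"
    show "f \<in> g -` T"
    proof -
      have "g f \<subseteq> V" unfolding g_def by auto
      moreover have "\<forall>(u, v) \<in> badp V E W h. win V E W h u v \<inter> g f \<noteq> {}"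
      proof (intro ballI, clarify)
        fix u v assume b: "(u, v) \<in> badp V E W h" and e: "win V E W h u v \<inter> g f = {}"
        have "win V E W h u v \<subseteq> V" by (rule badp_props(1)[OF fin nn b])
        then have "f \<in> F (u, v)" using e unfolding F_def g_def by auto
        then show False using f b unfolding B_def by auto
      qed
      ultimately show ?thesis using T by auto
    qed
  qed
  have "measure_pmf.prob (sample_set V p) T = measure_pmf.prob M (g -` T)"
    unfolding sample_set_def M_def g_def by simp
  also have "measure_pmf.prob M (g -` T) \<ge> measure_pmf.prob M (UNIV - (\<Union>b\<in>B. F b))"
    by (rule measure_pmf.finite_measure_mono[OF pre]) simp
  moreover have "measure_pmf.prob M (UNIV - (\<Union>b\<in>B. F b)) = 1 - measure_pmf.prob M (\<Union>b\<in>B. F b)"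
    using measure_pmf.prob_compl[of "\<Union>b\<in>B. F b" M] by simp
  moreover have "measure_pmf.prob M (\<Union>b\<in>B. F b) \<le> (\<Sum>b\<in>B. measure_pmf.prob M (F b))"
    by (rule measure_pmf.finite_measure_subadditive_finite[OF finB]) simp
  moreover have "(\<Sum>b\<in>B. measure_pmf.prob M (F b)) = (\<Sum>b\<in>B. (1 - p) ^ (2 * h))"
  proof (intro sum.cong refl)
    fix b assume b: "b \<in> B"
    obtain u v where uv: "b = (u, v)" by (cases b)
    have bb: "(u, v) \<in> badp V E W h" using b uv unfolding B_def by simp
    show "measure_pmf.prob M (F b) = (1 - p) ^ (2 * h)"
      unfolding M_def F_def uv fst_conv snd_conv
      using prob_miss[OF fin badp_props(1)[OF fin nn bb] p] badp_props(2)[OF fin nn bb] by simp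
  qed
  ultimately show ?thesis unfolding B_def by simp
qed

lemma numeric:
  fixes n h Bc :: nat and c :: real
  assumes h: "h \<ge> 1" and c: "c \<ge> 1" and Bc: "Bc \<le> n ^ 2" and n3: "Bc \<noteq> 0 \<Longrightarrow> 3 \<le> n"
  defines "p \<equiv> min ((c + 2) * log 2 (real n) / real h) 1"
  shows "real Bc * (1 - p) ^ (2 * h) \<le> real n powr (- c)"
proof (cases "Bc = 0")
  case True then show ?thesis by simp
next
  case False
  have n: "3 \<le> n" using n3[OF False] .
  have n0: "0 < real n" using n by simp
  have ln0: "0 < ln (real n)" using n by simp
  define L where "L = log 2 (real n)"
  have L: "L = ln (real n) / ln 2" unfolding L_def by (simp add: log_def)
  have ln2: "0 < ln (2::real)" "ln (2::real) < 1" using ln_2_less_1 by auto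
  have LL: "ln (real n) \<le> L" unfolding L using ln0 ln2
    by (simp add: le_divide_eq mult_le_cancel_left1 less_imp_le)
  have L0: "0 < L" using LL ln0 by simp
  define q where "q = (c + 2) * L / real h"
  have q0: "0 < q" unfolding q_def using L0 c h by simp
  show ?thesis
  proof (cases "q \<ge> 1")
    case True
    then have "p = 1" unfolding p_def q_def[symmetric] L_def[symmetric] by simp
    then have z: "(1 - p) ^ (2 * h) = 0" using h by (simp add: power_0_left)
    show ?thesis unfolding z by simp
  next
    case qF: False
    then have pq: "p = q" unfolding p_def q_def[symmetric] L_def[symmetric] by simp
    have "(1 - p) ^ (2 * h) \<le> exp (- p) ^ (2 * h)"
      using pq q0 qF exp_ge_add_one_self[of "- p"] by (intro power_mono) auto
    also have "\<dots> = exp (real (2 * h) * (- p))" by (rule exp_of_nat_mult[symmetric])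
    also have "real (2 * h) * (- p) = - (2 * (c + 2) * L)" using pq h unfolding q_def by simp
    also have "exp (- (2 * (c + 2) * L)) \<le> exp (- ((c + 2) * ln (real n)))"
      using LL c ln0 by (intro exp_le_cancel_iff[THEN iffD2]) (auto intro!: mult_mono)
    also have "exp (- ((c + 2) * ln (real n))) = real n powr (- (c + 2))"
      using n0 by (simp add: powr_def; simp add: algebra_simps)
    finally have X: "(1 - p) ^ (2 * h) \<le> real n powr (- (c + 2))" .
    have "real Bc * (1 - p) ^ (2 * h) \<le> real n ^ 2 * real n powr (- (c + 2))"
      using Bc X pq q0 qF by (intro mult_mono) (auto simp flip: of_nat_power)
    also have "real n ^ 2 = real n powr 2" using n0 by simp
    also have "real n powr 2 * real n powr (- (c + 2)) = real n powr (- c)"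
    proof -
      have ex: "2 + - (c + 2) = - c" by simp
      show ?thesis by (simp only: powr_add[symmetric] ex)
    qed
    finally show ?thesis .
  qed
qed

lemma det_main2:
  fixes V :: "'a set" and E :: "('a \<times> 'a) set" and W :: "'a \<Rightarrow> 'a \<Rightarrow> ereal"
    and dt :: "'a \<Rightarrow> 'a \<Rightarrow> ereal" and \<epsilon> :: real and S :: "'a set"
  assumes fin: "finite V" and nn: "nonneg_w E W" and symE: "sym E"
    and symW: "\<And>x y. (x, y) \<in> E \<Longrightarrow> W x y = W y x"
    and SV: "S \<subseteq> V"
    and hitS: "\<forall>(u, v) \<in> badp V E W h. win V E W h u v \<inter> S \<noteq> {}"
    and A: "\<forall>s\<in>S. \<forall>v\<in>V. gdist V E W s v \<le> dt s v \<and> dt s v \<le> ereal (1 + \<epsilon>) * hop_dist V E W (2 * h) s v"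
    and sp: "is_spanner S {(s, s'). s \<in> S \<and> s' \<in> S \<and> s \<noteq> s' \<and> min (dt s s') (dt s' s) < \<infinity>}
               (\<lambda>s s'. min (dt s s') (dt s' s)) E' (ereal (2 * real k - 1))"
    and k: "k \<ge> 1" and eps: "\<epsilon> > 0"
  shows "\<forall>s\<in>S. \<forall>v\<in>V. gdist V E W s v \<le> (INF s'\<in>S. gdist S E' (\<lambda>s s'. min (dt s s') (dt s' s)) s s' + dt s' v) \<and>
           (INF s'\<in>S. gdist S E' (\<lambda>s s'. min (dt s s') (dt s' s)) s s' + dt s' v)
             \<le> ereal ((2 * real k - 1) * (1 + \<epsilon>)) * gdist V E W s v"
proof -
  have hit: "win V E W h u v \<inter> S \<noteq> {}" if "(u, v) \<in> badp V E W h" for u v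
    using bspec[OF hitS that] by simp
  have dt12: "gdist V E W s v \<le> dt s v \<and> dt s v \<le> ereal (1 + \<epsilon>) * hop_dist V E W (2 * h) s v"
    if "s \<in> S" "v \<in> V" for s v
    using bspec[OF bspec[OF A that(1)] that(2)] .
  have dt1: "gdist V E W s v \<le> dt s v" if "s \<in> S" "v \<in> V" for s v
    using dt12[OF that] by (rule conjunct1)
  have dt2: "dt s v \<le> ereal (1 + \<epsilon>) * hop_dist V E W (2 * h) s v" if "s \<in> S" "v \<in> V" for s v
    using dt12[OF that] by (rule conjunct2)
  show ?thesis
    by (intro ballI) (rule det_main[OF fin nn symE symW SV hit dt1 dt2 sp k eps], assumption+)
qed

theorem mainTheorem11:
  fixes V :: "'a set" and E :: "('a \<times> 'a) set" and w :: "'a \<Rightarrow> 'a \<Rightarrow> real"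
    and h k :: nat and \<epsilon> c :: real
  assumes G: "weighted_graph V E w"
    and h: "h \<ge> 1" and k: "k \<ge> 1" and eps: "\<epsilon> > 0" and c: "c \<ge> 1"
  shows "measure_pmf.prob
           (sample_set V (min ((c + 2) * log 2 (real (card V)) / real h) 1))
           {S. \<forall>dt :: 'a \<Rightarrow> 'a \<Rightarrow> ereal. \<forall>E' :: ('a \<times> 'a) set.
               (\<forall>s\<in>S. \<forall>v\<in>V.
                  gdist V E (\<lambda>x y. ereal (w x y)) s v \<le> dt s v \<and>
                  dt s v \<le> ereal (1 + \<epsilon>) * hop_dist V E (\<lambda>x y. ereal (w x y)) (2 * h) s v) \<longrightarrow>
               is_spanner S
                 {(s, s'). s \<in> S \<and> s' \<in> S \<and> s \<noteq> s' \<and> min (dt s s') (dt s' s) < \<infinity>}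
                 (\<lambda>s s'. min (dt s s') (dt s' s)) E' (ereal (2 * real k - 1)) \<longrightarrow>
               (\<forall>s\<in>S. \<forall>v\<in>V.
                  gdist V E (\<lambda>x y. ereal (w x y)) s v
                    \<le> (INF s'\<in>S. gdist S E' (\<lambda>s s'. min (dt s s') (dt s' s)) s s' + dt s' v) \<and>
                  (INF s'\<in>S. gdist S E' (\<lambda>s s'. min (dt s s') (dt s' s)) s s' + dt s' v)
                    \<le> ereal ((2 * real k - 1) * (1 + \<epsilon>)) * gdist V E (\<lambda>x y. ereal (w x y)) s v)}
         \<ge> 1 - real (card V) powr (- c)"
  proof -
  let ?W = "\<lambda>x y. ereal (w x y)"
  have fin: "finite V" and EV: "E \<subseteq> V \<times> V" and symE: "sym E"
    and wprop: "\<forall>(u, v)\<in>E. w u v = w v u \<and> w u v > 0"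
    using G unfolding weighted_graph_def by auto
  have nn: "nonneg_w E ?W" unfolding nonneg_w_def using wprop by (auto intro: less_imp_le)
  have symW: "\<And>x y. (x, y) \<in> E \<Longrightarrow> ?W x y = ?W y x" using wprop by auto
  define p where "p = min ((c + 2) * log 2 (real (card V)) / real h) 1"
  have lg: "0 \<le> log 2 (real (card V))"
  proof (cases "card V = 0")
    case True then show ?thesis by (simp add: log_def)
  next
    case False then show ?thesis by simp
  qed
  have p: "0 \<le> p" "p \<le> 1" unfolding p_def using lg c by auto
  have T: "S \<in> {S. \<forall>dt :: 'a \<Rightarrow> 'a \<Rightarrow> ereal. \<forall>E' :: ('a \<times> 'a) set.
               (\<forall>s\<in>S. \<forall>v\<in>V.
                  gdist V E (\<lambda>x y. ereal (w x y)) s v \<le> dt s v \<and>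
                  dt s v \<le> ereal (1 + \<epsilon>) * hop_dist V E (\<lambda>x y. ereal (w x y)) (2 * h) s v) \<longrightarrow>
               is_spanner S
                 {(s, s'). s \<in> S \<and> s' \<in> S \<and> s \<noteq> s' \<and> min (dt s s') (dt s' s) < \<infinity>}
                 (\<lambda>s s'. min (dt s s') (dt s' s)) E' (ereal (2 * real k - 1)) \<longrightarrow>
               (\<forall>s\<in>S. \<forall>v\<in>V.
                  gdist V E (\<lambda>x y. ereal (w x y)) s v
                    \<le> (INF s'\<in>S. gdist S E' (\<lambda>s s'. min (dt s s') (dt s' s)) s s' + dt s' v) \<and>
                  (INF s'\<in>S. gdist S E' (\<lambda>s s'. min (dt s s') (dt s' s)) s s' + dt s' v)
                    \<le> ereal ((2 * real k - 1) * (1 + \<epsilon>)) * gdist V E (\<lambda>x y. ereal (w x y)) s v)}"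
    if SV: "S \<subseteq> V" and hitS: "\<forall>(u, v) \<in> badp V E ?W h. win V E ?W h u v \<inter> S \<noteq> {}" for S
    apply (simp only: mem_Collect_eq)
    apply (intro allI impI)
    apply (rule det_main2[OF fin nn symE symW SV hitS])
    apply (assumption | rule k eps)+
    done
  have pb: "measure_pmf.prob (sample_set V p) {S. \<forall>dt :: 'a \<Rightarrow> 'a \<Rightarrow> ereal. \<forall>E' :: ('a \<times> 'a) set.
               (\<forall>s\<in>S. \<forall>v\<in>V.
                  gdist V E (\<lambda>x y. ereal (w x y)) s v \<le> dt s v \<and>
                  dt s v \<le> ereal (1 + \<epsilon>) * hop_dist V E (\<lambda>x y. ereal (w x y)) (2 * h) s v) \<longrightarrow>
               is_spanner S
                 {(s, s'). s \<in> S \<and> s' \<in> S \<and> s \<noteq> s' \<and> min (dt s s') (dt s' s) < \<infinity>}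
                 (\<lambda>s s'. min (dt s s') (dt s' s)) E' (ereal (2 * real k - 1)) \<longrightarrow>
               (\<forall>s\<in>S. \<forall>v\<in>V.
                  gdist V E (\<lambda>x y. ereal (w x y)) s v
                    \<le> (INF s'\<in>S. gdist S E' (\<lambda>s s'. min (dt s s') (dt s' s)) s s' + dt s' v) \<and>
                  (INF s'\<in>S. gdist S E' (\<lambda>s s'. min (dt s s') (dt s' s)) s s' + dt s' v)
                    \<le> ereal ((2 * real k - 1) * (1 + \<epsilon>)) * gdist V E (\<lambda>x y. ereal (w x y)) s v)}
        \<ge> 1 - real (card (badp V E ?W h)) * (1 - p) ^ (2 * h)"
    by (rule prob_bound[OF fin nn p T])
  have Bsub: "badp V E ?W h \<subseteq> V \<times> V" unfolding badp_def by auto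
  have Bc: "card (badp V E ?W h) \<le> card V ^ 2"
  proof -
    have "card (badp V E ?W h) \<le> card (V \<times> V)" by (rule card_mono[OF _ Bsub]) (use fin in simp)
    then show ?thesis by (simp add: card_cartesian_product power2_eq_square)
  qed
  have n3: "3 \<le> card V" if "card (badp V E ?W h) \<noteq> 0"
  proof -
    have ne: "badp V E ?W h \<noteq> {}" using that by (intro notI) simp
    obtain u v where "(u, v) \<in> badp V E ?W h" using ne by fast
    from badp_props(3)[OF fin nn this] h show ?thesis by simp
  qed
  have num: "real (card (badp V E ?W h)) * (1 - p) ^ (2 * h) \<le> real (card V) powr (- c)"
    unfolding p_def by (rule numeric[OF h c Bc n3])
  have "1 - real (card V) powr (- c) \<le> 1 - real (card (badp V E ?W h)) * (1 - p) ^ (2 * h)"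
    using num by (rule diff_left_mono)
  from order.trans[OF this pb] show ?thesis unfolding p_def .
qed

end
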